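(* Let $m\ge 2$, $2\le k\le m$, $N=\binom{m}{k}$ and $\pi\in\mathbb{R}^m_{>0}$. A discrete choice design $\xi^*$ is locally $D$-optimal (for $\pi$) if and only if (i) $\xi^*\in\Delta_N$, (ii) $R^{-1}SL\,\vec{\Gamma}(\xi^* )\le (m-1)\mathbf{1}$ entrywise, and (iii) $\langle R^{-1}SL\,\vec{\Gamma}(\xi^* )-(m-1)\mathbf{1},\,\xi^*\rangle=0$.
   Context: Discrete choice model: alternatives $[m]$ with parameters $\pi_i>0$; choice sets $C_1,\ldots,C_N$ are all $k$-subsets of $[m]$ in lexicographic order, and in choice set $C_j$ alternative $i$ is chosen with probability $\pi_i/\sum_{s\in C_j}\pi_s$. A design is $\xi=(w_1,\ldots,w_N)\in\Delta_N=\{\xi\in\mathbb{R}^N_{\ge0}:\sum_j w_j=1\}$. Its information matrix $M(\xi)$ is the $m\times m$ symmetric matrix with off-diagonal entries $M_{st}(\xi)=-\pi_s\pi_t\sum_{j:\,s,t\in C_j} w_j/(\sum_{i\in C_j}\pi_i)^2$ and diagonal chosen so all row sums vanish. $M^{(m)}(\xi)$ is $M(\xi)$ with the $m$-th row and column deleted. $\xi^*$ is locally $D$-optimal if it maximizes $\log\det M^{(m)}(\xi)$ over $\xi\in\Delta_N$. $\Sigma^{(m)}(\xi)=M^{(m)}(\xi)^{-1}$ and $\Gamma(\xi)$ is its Farris transform: $\Gamma_{uv}=\Sigma_{uu}+\Sigma_{vv}-2\Sigma_{uv}$ for $u,v<m$, $\Gamma_{um}=\Gamma_{mu}=\Sigma_{uu}$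 for $u<m$, $\Gamma_{mm}=0$; $\vec{\Gamma}=(\Gamma_{uv})_{u<v}$ in lexicographic order of pairs. $S$ is the $N\times\binom{m}{2}$ matrix with $S_{j,(u,v)}=1$ if $u,v\in C_j$ and $0$ otherwise; $R=\mathrm{diag}\big((\sum_{i\in C_j}\pi_i)^2\big)_{j=1}^N$; $L=\mathrm{diag}(\pi_u\pi_v)_{u<v}$ in lexicographic order. $\langle\cdot,\cdot\rangle$ is the standard inner product on $\mathbb{R}^N$. *)

theory Defs
  imports "HOL-Library.Extended_Real" "Jordan_Normal_Form.Gauss_Jordan_Elimination"
          "Jordan_Normal_Form.Determinant"
begin

text \<open>Alternatives are 0,...,m-1 (the paper's alternative m is index m-1).
  Choice sets are the k-subsets of the alternatives; a design assigns a weight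
  to each choice set (indexing by the sets themselves instead of their
  position in lexicographic order).\<close>

definition choice_sets :: "nat \<Rightarrow> nat \<Rightarrow> nat set set" where
  "choice_sets m k = {C. C \<subseteq> {..<m} \<and> card C = k}"

definition simplex :: "nat \<Rightarrow> nat \<Rightarrow> (nat set \<Rightarrow> real) set" where
  "simplex m k = {w. (\<forall>C\<in>choice_sets m k. 0 \<le> w C) \<and> (\<Sum>C\<in>choice_sets m k. w C) = 1}"

definition setsum_pi :: "(nat \<Rightarrow> real) \<Rightarrow> nat set \<Rightarrow> real" where
  "setsum_pi p C = (\<Sum>i\<in>C. p i)"

definition M_off :: "nat \<Rightarrow> nat \<Rightarrow> (nat \<Rightarrow> real) \<Rightarrow> (nat set \<Rightarrow> real) \<Rightarrow> nat \<Rightarrow> nat \<Rightarrow> real" where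
  "M_off m k p w s t = - p s * p t *
     (\<Sum>C\<in>{C\<in>choice_sets m k. s \<in> C \<and> t \<in> C}. w C / (setsum_pi p C)^2)"

text \<open>Entries of M(xi): diagonal chosen so that all row sums vanish.\<close>
definition M_entry :: "nat \<Rightarrow> nat \<Rightarrow> (nat \<Rightarrow> real) \<Rightarrow> (nat set \<Rightarrow> real) \<Rightarrow> nat \<Rightarrow> nat \<Rightarrow> real" where
  "M_entry m k p w s t =
     (if s = t then - (\<Sum>u\<in>{..<m} - {s}. M_off m k p w s u) else M_off m k p w s t)"

definition Mred :: "nat \<Rightarrow> nat \<Rightarrow> (nat \<Rightarrow> real) \<Rightarrow> (nat set \<Rightarrow> real) \<Rightarrow> real mat" where
  "Mred m k p w = mat (m - 1) (m - 1) (\<lambda>(s, t). M_entry m k p w s t)"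

definition logdet :: "nat \<Rightarrow> nat \<Rightarrow> (nat \<Rightarrow> real) \<Rightarrow> (nat set \<Rightarrow> real) \<Rightarrow> ereal" where
  "logdet m k p w = (if det (Mred m k p w) > 0 then ereal (ln (det (Mred m k p w))) else -\<infinity>)"

definition locally_D_optimal :: "nat \<Rightarrow> nat \<Rightarrow> (nat \<Rightarrow> real) \<Rightarrow> (nat set \<Rightarrow> real) \<Rightarrow> bool" where
  "locally_D_optimal m k p w \<longleftrightarrow>
     w \<in> simplex m k \<and> (\<forall>w' \<in> simplex m k. logdet m k p w' \<le> logdet m k p w)"

text \<open>Sigma^(m)(xi) = M^(m)(xi)^{-1} (meaningful when M^(m)(xi) is nonsingular).\<close>
definition Sigma :: "nat \<Rightarrow> nat \<Rightarrow> (nat \<Rightarrow> real) \<Rightarrow> (nat set \<Rightarrow> real) \<Rightarrow> real mat" where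
  "Sigma m k p w = (case mat_inverse (Mred m k p w) of Some A \<Rightarrow> A | None \<Rightarrow> 0\<^sub>m (m - 1) (m - 1))"

text \<open>Farris transform Gamma(xi), for indices u, v < m (last alternative is m-1).\<close>
definition Gamma :: "nat \<Rightarrow> nat \<Rightarrow> (nat \<Rightarrow> real) \<Rightarrow> (nat set \<Rightarrow> real) \<Rightarrow> nat \<Rightarrow> nat \<Rightarrow> real" where
  "Gamma m k p w u v =
    (let S = Sigma m k p w in
     if u = m - 1 \<and> v = m - 1 then 0
     else if v = m - 1 then S $$ (u, u)
     else if u = m - 1 then S $$ (v, v)
     else S $$ (u, u) + S $$ (v, v) - 2 * S $$ (u, v))"

text \<open>The C-th entry of the vector R^{-1} S L vec(Gamma(xi)).\<close>
definition RSLGamma :: "nat \<Rightarrow> nat \<Rightarrow> (nat \<Rightarrow> real) \<Rightarrow> (nat set \<Rightarrow> real) \<Rightarrow> nat set \<Rightarrow> real" where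
  "RSLGamma m k p w C =
     (\<Sum>(u, v)\<in>{(u, v). u < v \<and> v < m \<and> u \<in> C \<and> v \<in> C}. p u * p v * Gamma m k p w u v)
       / (setsum_pi p C)^2"

end

theory Submission
  imports Defs "Jordan_Normal_Form.Schur_Decomposition"
begin

definition qf :: "nat \<Rightarrow> real mat \<Rightarrow> (nat \<Rightarrow> real) \<Rightarrow> real" where
  "qf n A x = (\<Sum>i<n. \<Sum>j<n. x i * A $$ (i,j) * x j)"
definition psd :: "nat \<Rightarrow> real mat \<Rightarrow> bool" where
  "psd n A = (\<forall>x. qf n A x \<ge> 0)"
definition pd :: "nat \<Rightarrow> real mat \<Rightarrow> bool" where
  "pd n A = (\<forall>x. (\<exists>i<n. x i \<noteq> 0) \<longrightarrow> qf n A x > 0)"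
definition symm :: "nat \<Rightarrow> real mat \<Rightarrow> bool" where
  "symm n A = (\<forall>i<n. \<forall>j<n. A $$ (i,j) = A $$ (j,i))"
definition mytr :: "'a::comm_ring_1 mat \<Rightarrow> 'a" where
  "mytr A = (\<Sum>i<dim_row A. A $$ (i,i))"

lemma pd_nonneg: assumes "pd n A" shows "qf n A x \<ge> 0"
proof (cases "\<exists>i<n. x i \<noteq> 0")
  case True then show ?thesis using assms unfolding pd_def by force
next
  case False then show ?thesis unfolding qf_def by simp
qed

lemma cmat_form_real:
  fixes M :: "real mat" and v :: "complex vec"
  assumes "symm n M"
  shows "(\<Sum>i<n. cnj (v$i) * (\<Sum>j<n. of_real (M$$(i,j)) * v$j)) =
     of_real (qf n M (\<lambda>i. Re (v$i)) + qf n M (\<lambda>i. Im (v$i)))"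
proof (rule complex_eqI)
  have "Im (\<Sum>i<n. cnj (v$i) * (\<Sum>j<n. of_real (M$$(i,j)) * v$j)) =
     (\<Sum>i<n. \<Sum>j<n. M$$(i,j) * (Re (v$i) * Im (v$j))) - (\<Sum>i<n. \<Sum>j<n. M$$(i,j) * (Im (v$i) * Re (v$j)))"
    by (simp add: Im_sum sum_distrib_left algebra_simps sum_subtractf)
  also have "(\<Sum>i<n. \<Sum>j<n. M$$(i,j) * (Im (v$i) * Re (v$j))) = (\<Sum>j<n. \<Sum>i<n. M$$(i,j) * (Im (v$i) * Re (v$j)))"
    by (rule sum.swap)
  also have "\<dots> = (\<Sum>i<n. \<Sum>j<n. M$$(i,j) * (Re (v$i) * Im (v$j)))"
    using assms unfolding symm_def by (intro sum.cong refl) (auto simp: mult.commute)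
  finally show "Im (\<Sum>i<n. cnj (v$i) * (\<Sum>j<n. of_real (M$$(i,j)) * v$j)) =
     Im (of_real (qf n M (\<lambda>i. Re (v$i)) + qf n M (\<lambda>i. Im (v$i))) :: complex)" by simp
  show "Re (\<Sum>i<n. cnj (v$i) * (\<Sum>j<n. of_real (M$$(i,j)) * v$j)) =
     Re (of_real (qf n M (\<lambda>i. Re (v$i)) + qf n M (\<lambda>i. Im (v$i))) :: complex)"
    by (simp add: Re_sum qf_def sum_distrib_left algebra_simps sum.distrib)
qed

lemma mult_mat_vec_index': "A \<in> carrier_mat n n \<Longrightarrow> v \<in> carrier_vec n \<Longrightarrow> i < n \<Longrightarrow>
   (A *\<^sub>v v) $ i = (\<Sum>j<n. A $$ (i,j) * v $ j)"
  by (auto simp: mult_mat_vec_def scalar_prod_def atLeast0LessThan)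

lemma eig_real:
  fixes A B X :: "real mat" and e :: complex
  assumes A: "A \<in> carrier_mat n n" and B: "B \<in> carrier_mat n n" and X: "X \<in> carrier_mat n n"
    and sA: "symm n A" and sB: "symm n B" and pA: "pd n A" and pB: "psd n B"
    and AX: "A * X = B"
    and ev: "eigenvalue (map_mat complex_of_real X) e"
  shows "e = of_real (Re e) \<and> Re e \<ge> 0"
proof -
  let ?Xc = "map_mat complex_of_real X"
  let ?Ac = "map_mat complex_of_real A"
  let ?Bc = "map_mat complex_of_real B"
  from ev obtain v where v: "eigenvector ?Xc v e" unfolding eigenvalue_def by auto
  hence vc: "v \<in> carrier_vec n" and v0: "v \<noteq> 0\<^sub>v n" and Xv: "?Xc *\<^sub>v v = e \<cdot>\<^sub>v v"
    using X unfolding eigenvector_def by auto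
  have "?Ac * ?Xc = ?Bc" using of_real_hom.mat_hom_mult[OF A X] AX by metis
  hence "?Bc *\<^sub>v v = ?Ac *\<^sub>v (?Xc *\<^sub>v v)"
    using assoc_mult_mat_vec[of ?Ac n n ?Xc n v] A X vc by simp
  also have "\<dots> = e \<cdot>\<^sub>v (?Ac *\<^sub>v v)" using Xv A vc by (simp add: mult_mat_vec)
  finally have BAv: "?Bc *\<^sub>v v = e \<cdot>\<^sub>v (?Ac *\<^sub>v v)" .
  let ?q = "\<lambda>M :: real mat. (\<Sum>i<n. cnj (v$i) * (\<Sum>j<n. of_real (M$$(i,j)) * v$j))"
  have "?q B = (\<Sum>i<n. cnj (v$i) * (?Bc *\<^sub>v v) $ i)"
    using B vc by (intro sum.cong refl) (subst mult_mat_vec_index'[of _ n], auto)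
  also have "\<dots> = (\<Sum>i<n. cnj (v$i) * (e * (?Ac *\<^sub>v v) $ i))"
    using BAv A vc by (intro sum.cong refl) simp
  also have "\<dots> = (\<Sum>i<n. cnj (v$i) * (e * (\<Sum>j<n. of_real (A$$(i,j)) * v$j)))"
    using A vc by (intro sum.cong refl) (subst mult_mat_vec_index'[of _ n], auto)
  also have "\<dots> = e * ?q A"
    by (simp add: sum_distrib_left mult.assoc mult.left_commute)
  finally have qBA: "?q B = e * ?q A" .
  define a where "a = qf n A (\<lambda>i. Re (v$i)) + qf n A (\<lambda>i. Im (v$i))"
  define b where "b = qf n B (\<lambda>i. Re (v$i)) + qf n B (\<lambda>i. Im (v$i))"
  have qA: "?q A = of_real a" unfolding a_def by (rule cmat_form_real[OF sA])
  have qB: "?q B = of_real b" unfolding b_def by (rule cmat_form_real[OF sB])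
  have b0: "b \<ge> 0" unfolding b_def using pB unfolding psd_def by (simp add: add_nonneg_nonneg)
  from v0 vc obtain i where i: "i < n" "v $ i \<noteq> 0" by (auto simp: vec_eq_iff)
  have "Re (v$i) \<noteq> 0 \<or> Im (v$i) \<noteq> 0"
  proof (rule ccontr)
    assume "\<not> (Re (v$i) \<noteq> 0 \<or> Im (v$i) \<noteq> 0)"
    hence "v$i = 0" by (simp add: complex_eq_iff)
    with i show False by simp
  qed
  hence "qf n A (\<lambda>i. Re (v$i)) > 0 \<or> qf n A (\<lambda>i. Im (v$i)) > 0"
  proof
    assume "Re (v$i) \<noteq> 0" thus ?thesis using pA i(1) unfolding pd_def
      by (metis (mono_tags, lifting))
  next
    assume "Im (v$i) \<noteq> 0" thus ?thesis using pA i(1) unfolding pd_def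
      by (metis (mono_tags, lifting))
  qed
  moreover have "qf n A (\<lambda>i. Re (v$i)) \<ge> 0" "qf n A (\<lambda>i. Im (v$i)) \<ge> 0" using pd_nonneg[OF pA] by auto
  ultimately have a0: "a > 0" unfolding a_def by linarith
  from qBA qA qB have "of_real b = e * of_real a" by simp
  have an: "(of_real a::complex) \<noteq> 0" using a0 by (metis less_irrefl of_real_eq_0_iff)
  have e: "e = of_real (b / a)" using \<open>of_real b = e * of_real a\<close> an
    by (metis of_real_divide nonzero_mult_div_cancel_right)
  have Re: "Re e = b / a" using e by (metis Re_complex_of_real)
  show ?thesis using e Re a0 b0 by (metis divide_nonneg_pos)
qed

lemma mytr_comm:
  assumes A: "A \<in> carrier_mat n m" and B: "B \<in> carrier_mat m n"
  shows "mytr (A * B) = mytr (B * A)"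
proof -
  have "mytr (A * B) = (\<Sum>i<n. \<Sum>j<m. A $$ (i,j) * B $$ (j,i))"
    unfolding mytr_def using A B by (intro sum.cong) (auto simp: scalar_prod_def atLeast0LessThan)
  also have "\<dots> = (\<Sum>j<m. \<Sum>i<n. B $$ (j,i) * A $$ (i,j))"
    by (subst sum.swap) (simp add: mult.commute)
  also have "\<dots> = mytr (B * A)"
    unfolding mytr_def using A B by (intro sum.cong) (auto simp: scalar_prod_def atLeast0LessThan)
  finally show ?thesis .
qed

lemma mytr_map: "X \<in> carrier_mat n n \<Longrightarrow> mytr (map_mat complex_of_real X) = of_real (mytr X)"
  unfolding mytr_def by (auto simp: of_real_sum intro!: sum.cong)

lemma eig_main:
  fixes A B Ai :: "real mat"
  assumes A: "A \<in> carrier_mat n n" and B: "B \<in> carrier_mat n n" and Ai: "Ai \<in> carrier_mat n n"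
    and sA: "symm n A" and sB: "symm n B" and pA: "pd n A" and pB: "psd n B"
    and AAi: "A * Ai = 1\<^sub>m n"
  shows "\<exists>l. (\<forall>i<n. l i \<ge> 0) \<and> mytr (Ai * B) = (\<Sum>i<n. l i) \<and>
     (\<forall>c t. det (c \<cdot>\<^sub>m 1\<^sub>m n + t \<cdot>\<^sub>m (Ai * B)) = (\<Prod>i<n. c + t * l i))"
proof -
  define X where "X = Ai * B"
  have X: "X \<in> carrier_mat n n" unfolding X_def using Ai B by simp
  have AX: "A * X = B" unfolding X_def
    using assoc_mult_mat[OF A Ai B, symmetric] AAi B by simp
  define Xc where "Xc = map_mat complex_of_real X"
  have Xc: "Xc \<in> carrier_mat n n" unfolding Xc_def using X by simp
  from char_poly_factorized[OF Xc] obtain es where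
    cp: "char_poly Xc = (\<Prod>a\<leftarrow>es. [:- a, 1:])" and les: "length es = n" by blast
  obtain T P Q where sd: "schur_decomposition Xc es = (T,P,Q)" by (cases "schur_decomposition Xc es") auto
  from schur_decomposition[OF Xc cp sd] have sim: "similar_mat_wit Xc T P Q"
    and ut: "upper_triangular T" and dg: "diag_mat T = es" by auto
  note sw = similar_mat_witD2[OF Xc sim]
  have T: "T \<in> carrier_mat n n" and P: "P \<in> carrier_mat n n" and Q: "Q \<in> carrier_mat n n"
    and PQ: "P * Q = 1\<^sub>m n" and QP: "Q * P = 1\<^sub>m n" and XPTQ: "Xc = P * T * Q" using sw by auto
  define l where "l i = Re (T $$ (i,i))" for i
  have Tii: "T $$ (i,i) = of_real (l i) \<and> l i \<ge> 0" if i: "i < n" for i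
  proof -
    have "T $$ (i,i) \<in> set es" using i T dg[symmetric] unfolding diag_mat_def by auto
    hence "poly (char_poly Xc) (T $$ (i,i)) = 0" unfolding cp poly_prod_list_zero_iff
      by (auto intro!: bexI[of _ "[:- (T $$ (i,i)), 1:]"])
    hence "eigenvalue Xc (T $$ (i,i))" using eigenvalue_root_char_poly[OF Xc] by simp
    from eig_real[OF A B X sA sB pA pB AX this[unfolded Xc_def]]
    show ?thesis unfolding l_def by simp
  qed
  have tr: "mytr X = (\<Sum>i<n. l i)"
  proof -
    have "of_real (mytr X) = mytr Xc" unfolding Xc_def using X by (simp add: mytr_map)
    also have "\<dots> = mytr (P * (T * Q))" using XPTQ assoc_mult_mat[OF P T Q] by simp
    also have "\<dots> = mytr ((T * Q) * P)" by (rule mytr_comm[OF P]) (use T Q in simp)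
    also have "\<dots> = mytr T" using assoc_mult_mat[OF T Q P] QP T by simp
    also have "\<dots> = (\<Sum>i<n. of_real (l i))" unfolding mytr_def using T Tii by (intro sum.cong) auto
    finally have "(of_real (mytr X) :: complex) = of_real (\<Sum>i<n. l i)" by (simp add: of_real_sum)
    thus ?thesis by (simp only: of_real_eq_iff)
  qed
  have dt: "det (c \<cdot>\<^sub>m 1\<^sub>m n + t \<cdot>\<^sub>m X) = (\<Prod>i<n. c + t * l i)" for c t
  proof -
    let ?c = "complex_of_real c" and ?t = "complex_of_real t"
    let ?U = "?c \<cdot>\<^sub>m 1\<^sub>m n + ?t \<cdot>\<^sub>m T"
    have U: "?U \<in> carrier_mat n n" using T by simp
    have "map_mat complex_of_real (c \<cdot>\<^sub>m 1\<^sub>m n + t \<cdot>\<^sub>m X) = ?c \<cdot>\<^sub>m 1\<^sub>m n + ?t \<cdot>\<^sub>m Xc"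
      unfolding Xc_def using X by (intro eq_matI) auto
    also have "\<dots> = P * ?U * Q"
    proof -
      have a: "P * (?c \<cdot>\<^sub>m 1\<^sub>m n) = ?c \<cdot>\<^sub>m P"
        using mult_smult_distrib[OF P one_carrier_mat] P by simp
      have b: "P * (?t \<cdot>\<^sub>m T) = ?t \<cdot>\<^sub>m (P * T)" by (rule mult_smult_distrib[OF P T])
      have "P * ?U = ?c \<cdot>\<^sub>m P + ?t \<cdot>\<^sub>m (P * T)"
        using mult_add_distrib_mat[OF P, of "?c \<cdot>\<^sub>m 1\<^sub>m n" n "?t \<cdot>\<^sub>m T"] P T a b
        by simp
      hence "P * ?U * Q = (?c \<cdot>\<^sub>m P + ?t \<cdot>\<^sub>m (P * T)) * Q" by simp
      also have "\<dots> = ?c \<cdot>\<^sub>m (P * Q) + ?t \<cdot>\<^sub>m (P * T * Q)"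
        using add_mult_distrib_mat[of "?c \<cdot>\<^sub>m P" n n "?t \<cdot>\<^sub>m (P * T)" Q n] P T Q
        by (simp add: mult_smult_assoc_mat[of _ n n _ n])
      finally show ?thesis using PQ XPTQ by simp
    qed
    finally have eq: "map_mat complex_of_real (c \<cdot>\<^sub>m 1\<^sub>m n + t \<cdot>\<^sub>m X) = P * ?U * Q" .
    have "of_real (det (c \<cdot>\<^sub>m 1\<^sub>m n + t \<cdot>\<^sub>m X)) = det (P * ?U * Q)"
      by (subst of_real_hom.hom_det[symmetric]) (simp only: eq)
    also have "\<dots> = det P * det ?U * det Q" using P U Q by (simp add: det_mult[of _ n])
    also have "\<dots> = det ?U * det (P * Q)" using P Q by (simp add: det_mult[of _ n])
    also have "\<dots> = det ?U" using PQ by simp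
    also have "\<dots> = prod_list (diag_mat ?U)"
      by (rule det_upper_triangular[OF _ U]) (use ut T in \<open>auto simp: upper_triangular_def\<close>)
    also have "\<dots> = (\<Prod>i<n. ?c + ?t * of_real (l i))"
      unfolding prod_list_diag_prod using T Tii by (auto simp: atLeast0LessThan intro!: prod.cong)
    finally have "(of_real (det (c \<cdot>\<^sub>m 1\<^sub>m n + t \<cdot>\<^sub>m X)) :: complex) = of_real (\<Prod>i<n. c + t * l i)"
      by (simp add: of_real_prod)
    thus ?thesis by (simp only: of_real_eq_iff)
  qed
  show ?thesis using Tii tr dt unfolding X_def by blast
qed

lemma qf_expand:
  assumes "symm n A"
  shows "qf n A (\<lambda>i. x i + s * y i) = qf n A x + 2 * s * (\<Sum>i<n. y i * (\<Sum>j<n. A $$ (i,j) * x j)) + s^2 * qf n A y"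
proof -
  have sw: "(\<Sum>i<n. \<Sum>j<n. x i * A $$ (i,j) * y j) = (\<Sum>i<n. y i * (\<Sum>j<n. A $$ (i,j) * x j))"
  proof -
    have "(\<Sum>i<n. \<Sum>j<n. x i * A $$ (i,j) * y j) = (\<Sum>j<n. \<Sum>i<n. x i * A $$ (i,j) * y j)"
      by (rule sum.swap)
    also have "\<dots> = (\<Sum>j<n. y j * (\<Sum>i<n. A $$ (j,i) * x i))"
      using assms unfolding symm_def by (auto simp: sum_distrib_left mult_ac intro!: sum.cong)
    finally show ?thesis .
  qed
  have "qf n A (\<lambda>i. x i + s * y i) = qf n A x + s * (\<Sum>i<n. \<Sum>j<n. x i * A $$ (i,j) * y j)
     + s * (\<Sum>i<n. y i * (\<Sum>j<n. A $$ (i,j) * x j)) + s^2 * qf n A y"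
    unfolding qf_def by (simp add: algebra_simps power2_eq_square sum.distrib sum_distrib_left)
  thus ?thesis using sw by simp
qed

lemma psd_zero:
  assumes sA: "symm n A" and pA: "psd n A" and q0: "qf n A x = 0" and i: "i < n"
  shows "(\<Sum>j<n. A $$ (i,j) * x j) = 0"
proof -
  define y where "y i = (\<Sum>j<n. A $$ (i,j) * x j)" for i
  define S where "S = (\<Sum>i<n. y i * y i)"
  define Q where "Q = qf n A y"
  have Q0: "Q \<ge> 0" unfolding Q_def using pA unfolding psd_def by simp
  have S0: "S \<ge> 0" unfolding S_def by (intro sum_nonneg) simp
  define s where "s = - S / (Q + 1)"
  have "0 \<le> qf n A (\<lambda>i. x i + s * y i)" using pA unfolding psd_def by simp
  also have "\<dots> = 2 * s * S + s^2 * Q" using qf_expand[OF sA, of x s y] q0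
    unfolding S_def Q_def y_def by simp
  finally have f0: "0 \<le> 2 * s * S + s^2 * Q" .
  have "S = 0"
  proof (rule ccontr)
    assume "S \<noteq> 0" hence Sp: "S > 0" using S0 by simp
    have "S / (Q + 1) > 0" using Sp Q0 by simp
    hence sn: "s < 0" unfolding s_def by simp
    have "Q / (Q + 1) \<le> 1" using Q0 by simp
    hence "S * (Q / (Q + 1)) \<le> S * 1" using Sp by (intro mult_left_mono) auto
    moreover have "s * Q = - (S * (Q / (Q + 1)))" unfolding s_def by simp
    ultimately have "2 * S + s * Q > 0" using Sp by linarith
    hence "s * (2 * S + s * Q) < 0" using sn by (simp add: mult_neg_pos)
    moreover have "2 * s * S + s^2 * Q = s * (2 * S + s * Q)" by (simp add: power2_eq_square algebra_simps)
    ultimately show False using f0 by linarith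
  qed
  hence "\<forall>i<n. y i * y i = 0" unfolding S_def
    using sum_nonneg_eq_0_iff[of "{..<n}" "\<lambda>i. y i * y i"] by simp
  thus ?thesis using i unfolding y_def by simp
qed

lemma psd_det_pd:
  assumes A: "A \<in> carrier_mat n n" and sA: "symm n A" and pA: "psd n A" and d: "det A \<noteq> 0"
  shows "pd n A"
  unfolding pd_def
proof (intro allI impI)
  fix x :: "nat \<Rightarrow> real" assume "\<exists>i<n. x i \<noteq> 0"
  then obtain i where i: "i < n" "x i \<noteq> 0" by blast
  show "qf n A x > 0"
  proof (rule ccontr)
    assume "\<not> qf n A x > 0"
    hence q0: "qf n A x = 0" using pA unfolding psd_def by (meson antisym not_le)
    let ?v = "vec n x"
    have "?v \<in> carrier_vec n" by simp
    moreover have "?v \<noteq> 0\<^sub>v n" using i by (metis index_vec index_zero_vec(1))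
    moreover have "A *\<^sub>v ?v = 0\<^sub>v n"
    proof (rule eq_vecI)
      fix i assume i: "i < dim_vec (0\<^sub>v n :: real vec)"
      hence i: "i < n" by simp
      have "(A *\<^sub>v ?v) $ i = (\<Sum>j<n. A $$ (i,j) * ?v $ j)" by (rule mult_mat_vec_index'[OF A _ i]) simp
      also have "\<dots> = (\<Sum>j<n. A $$ (i,j) * x j)" by (intro sum.cong) auto
      also have "\<dots> = 0" by (rule psd_zero[OF sA pA q0 i])
      finally show "(A *\<^sub>v ?v) $ i = 0\<^sub>v n $ i" using i by simp
    qed (use A in simp)
    ultimately have "det A = 0" using det_0_iff_vec_prod_zero[OF A] by blast
    with d show False by simp
  qed
qed

lemma pd_det:
  assumes A: "A \<in> carrier_mat n n" and pA: "pd n A"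
  shows "det A \<noteq> 0"
proof
  assume "det A = 0"
  then obtain v where v: "v \<in> carrier_vec n" "v \<noteq> 0\<^sub>v n" "A *\<^sub>v v = 0\<^sub>v n"
    using det_0_iff_vec_prod_zero[OF A] by blast
  from v obtain i where i: "i < n" "v $ i \<noteq> 0" by (auto simp: vec_eq_iff)
  have row0: "(\<Sum>j<n. A$$(i,j)*v$j) = 0" if "i<n" for i
    using mult_mat_vec_index'[OF A v(1) that] v(3) that by simp
  have "qf n A (\<lambda>i. v $ i) = (\<Sum>i<n. v$i * (\<Sum>j<n. A$$(i,j)*v$j))"
    unfolding qf_def by (simp add: sum_distrib_left mult.assoc)
  also have "\<dots> = 0" by (simp add: row0)
  finally have "qf n A (\<lambda>i. v $ i) = 0" .
  moreover have "qf n A (\<lambda>i. v $ i) > 0" using pA i unfolding pd_def by (metis (mono_tags, lifting))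
  ultimately show False by simp
qed

lemma pd_one: "pd n (1\<^sub>m n)" and symm_one: "symm n (1\<^sub>m n)"
proof -
  show "symm n (1\<^sub>m n)" unfolding symm_def by auto
  show "pd n (1\<^sub>m n)" unfolding pd_def
  proof (intro allI impI)
    fix x :: "nat \<Rightarrow> real" assume "\<exists>i<n. x i \<noteq> 0"
    then obtain i where i: "i < n" "x i \<noteq> 0" by blast
    have xi: "x i * x i > 0" using i(2) not_real_square_gt_zero by blast
    have "qf n (1\<^sub>m n) x = (\<Sum>i<n. x i * x i)" unfolding qf_def
      by (intro sum.cong refl) (simp add: if_distrib if_distribR cong: if_cong)
    also have "\<dots> > 0" using i xi
      by (intro sum_pos2[of "{..<n}" i]) auto
    finally show "qf n (1\<^sub>m n) x > 0" .
  qed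
qed

lemma psd_det_nonneg:
  assumes B: "B \<in> carrier_mat n n" and sB: "symm n B" and pB: "psd n B"
  shows "det B \<ge> 0"
proof -
  from eig_main[OF one_carrier_mat B one_carrier_mat symm_one sB pd_one pB] obtain l where
    l: "\<forall>i<n. l i \<ge> 0" "\<forall>c t. det (c \<cdot>\<^sub>m 1\<^sub>m n + t \<cdot>\<^sub>m (1\<^sub>m n * B)) = (\<Prod>i<n. c + t * l i)"
    by auto
  have "(0::real) \<cdot>\<^sub>m 1\<^sub>m n + 1 \<cdot>\<^sub>m (1\<^sub>m n * B) = B" using B by (intro eq_matI) auto
  hence "det B = (\<Prod>i<n. 0 + 1 * l i)" using l(2) by metis
  thus ?thesis using l(1) by (auto intro!: prod_nonneg)
qed

definition lap :: "nat \<Rightarrow> (nat \<Rightarrow> nat \<Rightarrow> real) \<Rightarrow> nat \<Rightarrow> nat \<Rightarrow> real" where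
  "lap m a s t = (if s = t then (\<Sum>u\<in>{..<m}-{s}. a s u) else - a s t)"

definition pairs :: "nat \<Rightarrow> (nat \<times> nat) set" where
  "pairs m = {(s,t). s < t \<and> t < m}"

lemma finite_pairs: "finite (pairs m)"
  by (rule finite_subset[of _ "{..<m} \<times> {..<m}"]) (auto simp: pairs_def)

lemma lap_sym: "(\<And>s t. a s t = a t s) \<Longrightarrow> lap m a s t = lap m a t s"
  unfolding lap_def by auto

lemma pairs_sum:
  fixes f :: "nat \<Rightarrow> nat \<Rightarrow> real"
  assumes sym: "\<And>s t. f s t = f t s"
  shows "(\<Sum>s<m. \<Sum>t<m. if s \<noteq> t then f s t else 0) = 2 * (\<Sum>(s,t)\<in>pairs m. f s t)"
proof -
  have P: "pairs m = Product_Type.Sigma {..<m} (\<lambda>s. {s<..<m})" unfolding pairs_def by auto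
  have lt: "(\<Sum>s<m. \<Sum>t<m. if s < t then f s t else 0) = (\<Sum>(s,t)\<in>pairs m. f s t)"
  proof -
    have "(\<Sum>s<m. \<Sum>t<m. if s < t then f s t else 0) = (\<Sum>s<m. \<Sum>t\<in>{s<..<m}. f s t)"
    proof (rule sum.cong[OF refl])
      fix s assume "s \<in> {..<m}"
      have "{t \<in> {..<m}. s < t} = {s<..<m}" by auto
      thus "(\<Sum>t<m. if s < t then f s t else 0) = (\<Sum>t\<in>{s<..<m}. f s t)"
        using sum.inter_filter[of "{..<m}" "f s" "\<lambda>t. s < t"] by simp
    qed
    also have "\<dots> = (\<Sum>(s,t)\<in>pairs m. f s t)" unfolding P by (subst sum.Sigma) auto
    finally show ?thesis .
  qed
  have gt: "(\<Sum>s<m. \<Sum>t<m. if t < s then f s t else 0) = (\<Sum>s<m. \<Sum>t<m. if s < t then f s t else 0)"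
  proof -
    have "(\<Sum>s<m. \<Sum>t<m. if t < s then f s t else 0) = (\<Sum>t<m. \<Sum>s<m. if t < s then f s t else 0)"
      by (rule sum.swap)
    also have "\<dots> = (\<Sum>s<m. \<Sum>t<m. if s < t then f s t else 0)"
      by (rule sum.cong[OF refl], rule sum.cong[OF refl]) (metis sym)
    finally show ?thesis .
  qed
  have "(\<Sum>s<m. \<Sum>t<m. if s \<noteq> t then f s t else 0) =
     (\<Sum>s<m. \<Sum>t<m. (if s < t then f s t else 0) + (if t < s then f s t else 0))"
    by (intro sum.cong refl) auto
  also have "\<dots> = (\<Sum>s<m. \<Sum>t<m. if s < t then f s t else 0) + (\<Sum>s<m. \<Sum>t<m. if t < s then f s t else 0)"
    by (simp add: sum.distrib)
  finally show ?thesis using lt gt by simp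
qed

lemma lap_pairs:
  assumes sa: "\<And>s t. a s t = a t s" and sG: "\<And>s t. G s t = G t s"
  shows "(\<Sum>s<m. \<Sum>t<m. G s t * lap m a s t) =
     (\<Sum>(s,t)\<in>pairs m. a s t * (G s s + G t t - 2 * G s t))"
proof -
  have step1: "(\<Sum>t<m. G s t * lap m a s t) = (\<Sum>t<m. if s \<noteq> t then a s t * (G s s - G s t) else 0)"
    if s: "s < m" for s
  proof -
    have "(\<Sum>t<m. G s t * lap m a s t) = G s s * lap m a s s + (\<Sum>t\<in>{..<m}-{s}. G s t * lap m a s t)"
      using s by (subst sum.remove[of _ s]) auto
    also have "\<dots> = (\<Sum>t\<in>{..<m}-{s}. a s t * (G s s - G s t))"
      by (simp add: lap_def sum_distrib_left sum_subtractf sum_negf algebra_simps)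
    also have "\<dots> = (\<Sum>t<m. if s \<noteq> t then a s t * (G s s - G s t) else 0)"
    proof -
      have "{t \<in> {..<m}. s \<noteq> t} = {..<m}-{s}" by auto
      thus ?thesis using sum.inter_filter[of "{..<m}" "\<lambda>t. a s t * (G s s - G s t)" "\<lambda>t. s \<noteq> t"] by simp
    qed
    finally show ?thesis .
  qed
  define X where "X = (\<Sum>s<m. \<Sum>t<m. if s \<noteq> t then a s t * G s s else 0)"
  define X' where "X' = (\<Sum>s<m. \<Sum>t<m. if s \<noteq> t then a s t * G t t else 0)"
  define Y where "Y = (\<Sum>s<m. \<Sum>t<m. if s \<noteq> t then a s t * G s t else 0)"
  have XX: "X' = X"
  proof -
    have "X' = (\<Sum>t<m. \<Sum>s<m. if s \<noteq> t then a s t * G t t else 0)" unfolding X'_def by (rule sum.swap)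
    also have "\<dots> = X" unfolding X_def using sa by (intro sum.cong refl) auto
    finally show ?thesis .
  qed
  have "(\<Sum>s<m. \<Sum>t<m. G s t * lap m a s t) = (\<Sum>s<m. \<Sum>t<m. if s \<noteq> t then a s t * (G s s - G s t) else 0)"
    by (rule sum.cong[OF refl]) (simp add: step1)
  also have "\<dots> = X - Y" unfolding X_def Y_def
    by (simp add: sum_subtractf[symmetric] if_distrib algebra_simps cong: if_cong)
  also have "\<dots> = (1/2) * (X + X' - 2 * Y)" using XX by simp
  also have "X + X' - 2 * Y = (\<Sum>s<m. \<Sum>t<m. (if s\<noteq>t then a s t * G s s else 0) + (if s\<noteq>t then a s t * G t t else 0) - 2 * (if s\<noteq>t then a s t * G s t else 0))"
    unfolding X_def X'_def Y_def by (simp add: sum.distrib sum_subtractf sum_distrib_left)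
  also have "\<dots> = (\<Sum>s<m. \<Sum>t<m. if s \<noteq> t then a s t * (G s s + G t t - 2 * G s t) else 0)"
    by (intro sum.cong refl) (auto simp: algebra_simps)
  also have "\<dots> = 2 * (\<Sum>(s,t)\<in>pairs m. a s t * (G s s + G t t - 2 * G s t))"
    by (rule pairs_sum) (simp add: sa sG)
  finally show ?thesis by simp
qed

definition lapmat :: "nat \<Rightarrow> (nat \<Rightarrow> nat \<Rightarrow> real) \<Rightarrow> real mat" where
  "lapmat n a = mat n n (\<lambda>(s,t). lap (Suc n) a s t)"

lemma lapmat_carrier[simp]: "lapmat n a \<in> carrier_mat n n"
  unfolding lapmat_def by simp

lemma lapmat_symm: "(\<And>s t. a s t = a t s) \<Longrightarrow> symm n (lapmat n a)"
  unfolding symm_def lapmat_def by (auto intro: lap_sym)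

lemma ext_sum:
  fixes G L :: "nat \<Rightarrow> nat \<Rightarrow> real"
  assumes "\<And>t. G n t = 0" "\<And>s. G s n = 0"
  shows "(\<Sum>s<Suc n. \<Sum>t<Suc n. G s t * L s t) = (\<Sum>s<n. \<Sum>t<n. G s t * L s t)"
  using assms by (simp add: sum.lessThan_Suc)

lemma lap_qf:
  assumes sa: "\<And>s t. a s t = a t s"
  shows "qf n (lapmat n a) x =
    (\<Sum>(s,t)\<in>pairs (Suc n). a s t * ((if s < n then x s else 0) - (if t < n then x t else 0))^2)"
proof -
  define X where "X s = (if s < n then x s else 0)" for s
  have "qf n (lapmat n a) x = (\<Sum>s<n. \<Sum>t<n. (X s * X t) * lap (Suc n) a s t)"
    unfolding qf_def lapmat_def X_def by (intro sum.cong refl) (auto simp: mult_ac)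
  also have "\<dots> = (\<Sum>s<Suc n. \<Sum>t<Suc n. (X s * X t) * lap (Suc n) a s t)"
    by (rule ext_sum[symmetric]) (auto simp: X_def)
  also have "\<dots> = (\<Sum>(s,t)\<in>pairs (Suc n). a s t * (X s * X s + X t * X t - 2 * (X s * X t)))"
    by (rule lap_pairs) (auto simp: sa mult.commute)
  also have "\<dots> = (\<Sum>(s,t)\<in>pairs (Suc n). a s t * (X s - X t)^2)"
    by (intro sum.cong refl) (auto simp: power2_eq_square algebra_simps)
  finally show ?thesis unfolding X_def .
qed

lemma lap_psd:
  assumes sa: "\<And>s t. a s t = a t s" and nn: "\<And>s t. s < Suc n \<Longrightarrow> t < Suc n \<Longrightarrow> 0 \<le> a s t"
  shows "psd n (lapmat n a)"
  unfolding psd_def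
proof
  fix x
  show "0 \<le> qf n (lapmat n a) x" unfolding lap_qf[OF sa]
    by (intro sum_nonneg) (auto simp: pairs_def intro!: mult_nonneg_nonneg nn)
qed

lemma lap_pd:
  assumes sa: "\<And>s t. a s t = a t s" and nn: "\<And>s t. s < Suc n \<Longrightarrow> t < Suc n \<Longrightarrow> 0 \<le> a s t"
    and pos: "\<And>s t. s < Suc n \<Longrightarrow> t < Suc n \<Longrightarrow> s \<noteq> t \<Longrightarrow> 0 < a s t"
  shows "pd n (lapmat n a)"
  unfolding pd_def
proof (intro allI impI)
  fix x :: "nat \<Rightarrow> real" assume "\<exists>i<n. x i \<noteq> 0"
  then obtain i where i: "i < n" "x i \<noteq> 0" by blast
  let ?f = "\<lambda>(s,t). a s t * ((if s < n then x s else 0) - (if t < n then x t else 0))^2"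
  have mem: "(i, n) \<in> pairs (Suc n)" using i unfolding pairs_def by auto
  have "0 < ?f (i, n)" using i pos[of i n] by simp
  also have "\<dots> \<le> sum ?f (pairs (Suc n))"
    by (rule member_le_sum[OF mem _ finite_pairs]) (auto simp: pairs_def intro!: mult_nonneg_nonneg nn)
  also have "\<dots> = qf n (lapmat n a) x" unfolding lap_qf[OF sa] ..
  finally show "0 < qf n (lapmat n a) x" .
qed

lemma lap_trace:
  assumes Si: "Si \<in> carrier_mat n n" and sS: "symm n Si" and sa: "\<And>s t. a s t = a t s"
  shows "mytr (Si * lapmat n a) = (\<Sum>(s,t)\<in>pairs (Suc n). a s t *
     ((if s < n then Si $$ (s,s) else 0) + (if t < n then Si $$ (t,t) else 0)
      - 2 * (if s < n \<and> t < n then Si $$ (s,t) else 0)))"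
proof -
  define G where "G s t = (if s < n \<and> t < n then Si $$ (s,t) else 0)" for s t
  have sG: "G s t = G t s" for s t using sS unfolding G_def symm_def by auto
  have "mytr (Si * lapmat n a) = (\<Sum>s<n. \<Sum>t<n. G s t * lap (Suc n) a s t)"
    unfolding mytr_def using Si
    by (auto simp: lapmat_def scalar_prod_def atLeast0LessThan G_def intro!: sum.cong lap_sym sa)
  also have "\<dots> = (\<Sum>s<Suc n. \<Sum>t<Suc n. G s t * lap (Suc n) a s t)"
    by (rule ext_sum[symmetric]) (auto simp: G_def)
  also have "\<dots> = (\<Sum>(s,t)\<in>pairs (Suc n). a s t * (G s s + G t t - 2 * G s t))"
    by (rule lap_pairs[OF sa sG])
  finally show ?thesis unfolding G_def by simp
qed

definition aw :: "nat \<Rightarrow> nat \<Rightarrow> (nat \<Rightarrow> real) \<Rightarrow> (nat set \<Rightarrow> real) \<Rightarrow> nat \<Rightarrow> nat \<Rightarrow> real" where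
  "aw m k p w s t = - M_off m k p w s t"

lemma M_entry_lap: "M_entry m k p w s t = lap m (aw m k p w) s t"
  unfolding M_entry_def lap_def aw_def by (simp add: sum_negf)

lemma Mred_lapmat: "m = Suc n \<Longrightarrow> Mred m k p w = lapmat n (aw m k p w)"
  unfolding Mred_def lapmat_def M_entry_lap by simp

lemma aw_sym: "aw m k p w s t = aw m k p w t s"
  unfolding aw_def M_off_def by (simp add: conj_commute mult.commute)

lemma finite_cs: "finite (choice_sets m k)"
  unfolding choice_sets_def by (rule finite_subset[of _ "Pow {..<m}"]) auto

lemma aw_sum: "aw m k p w s t = (\<Sum>C\<in>choice_sets m k. w C *
    (p s * p t * (if s \<in> C \<and> t \<in> C then 1 / (setsum_pi p C)^2 else 0)))"
proof -
  have "aw m k p w s t = p s * p t * (\<Sum>C\<in>choice_sets m k. if s \<in> C \<and> t \<in> C then w C / (setsum_pi p C)^2 else 0)"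
    unfolding aw_def M_off_def
    using sum.inter_filter[OF finite_cs[of m k], where g="\<lambda>C. w C / (setsum_pi p C)^2" and P="\<lambda>C. s \<in> C \<and> t \<in> C"]
    by simp
  also have "\<dots> = (\<Sum>C\<in>choice_sets m k. w C *
    (p s * p t * (if s \<in> C \<and> t \<in> C then 1 / (setsum_pi p C)^2 else 0)))"
    by (simp add: sum_distrib_left mult_ac if_distrib cong: if_cong)
  finally show ?thesis .
qed

lemma aw_nonneg:
  assumes w: "\<And>C. C \<in> choice_sets m k \<Longrightarrow> 0 \<le> w C" and p: "\<And>i. i < m \<Longrightarrow> 0 < p i"
    and s: "s < m" and t: "t < m"
  shows "0 \<le> aw m k p w s t"
  unfolding aw_sum using p[OF s] p[OF t] w
  by (intro sum_nonneg) (auto intro!: mult_nonneg_nonneg)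

lemma aw_lin: "aw m k p (\<lambda>C. \<alpha> * w1 C + \<beta> * w2 C) s t = \<alpha> * aw m k p w1 s t + \<beta> * aw m k p w2 s t"
  unfolding aw_sum by (simp add: sum.distrib sum_distrib_left algebra_simps)

lemma lapmat_lin: "lapmat n (\<lambda>s t. \<alpha> * a1 s t + \<beta> * a2 s t) = \<alpha> \<cdot>\<^sub>m lapmat n a1 + \<beta> \<cdot>\<^sub>m lapmat n a2"
  unfolding lapmat_def lap_def
  by (intro eq_matI) (auto simp: sum.distrib sum_distrib_left)

lemma setsum_pi_pos:
  assumes C: "C \<in> choice_sets m k" and k: "2 \<le> k" and p: "\<And>i. i < m \<Longrightarrow> 0 < p i"
  shows "0 < setsum_pi p C"
proof -
  from C have Cm: "C \<subseteq> {..<m}" and cC: "card C = k" unfolding choice_sets_def by auto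
  have fin: "finite C" using Cm finite_subset by blast
  have "C \<noteq> {}" using cC k by auto
  thus ?thesis unfolding setsum_pi_def using fin Cm p by (intro sum_pos) auto
qed

lemma trace_Mred:
  assumes mn: "m = Suc n" and Si: "Si \<in> carrier_mat n n" and sS: "symm n Si"
  shows "mytr (Si * Mred m k p w') = (\<Sum>C\<in>choice_sets m k. w' C *
     (\<Sum>(s,t)\<in>pairs m. (p s * p t * (if s \<in> C \<and> t \<in> C then 1 / (setsum_pi p C)^2 else 0)) *
     ((if s < n then Si $$ (s,s) else 0) + (if t < n then Si $$ (t,t) else 0)
      - 2 * (if s < n \<and> t < n then Si $$ (s,t) else 0))))"
proof -
  define H where "H s t = ((if s < n then Si $$ (s,s) else 0) + (if t < n then Si $$ (t,t) else 0)
      - 2 * (if s < n \<and> t < n then Si $$ (s,t) else 0))" for s t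
  define c where "c C s t = p s * p t * (if s \<in> C \<and> t \<in> C then 1 / (setsum_pi p C)^2 else 0)" for C s t
  have "mytr (Si * Mred m k p w') = mytr (Si * lapmat n (aw m k p w'))" using Mred_lapmat[OF mn] by simp
  also have "\<dots> = (\<Sum>(s,t)\<in>pairs (Suc n). aw m k p w' s t *
     ((if s < n then Si $$ (s,s) else 0) + (if t < n then Si $$ (t,t) else 0)
      - 2 * (if s < n \<and> t < n then Si $$ (s,t) else 0)))" by (rule lap_trace[OF Si sS aw_sym])
  also have "\<dots> = (\<Sum>x\<in>pairs m. aw m k p w' (fst x) (snd x) * H (fst x) (snd x))"
    using mn by (simp add: H_def split_def)
  also have "\<dots> = (\<Sum>x\<in>pairs m. \<Sum>C\<in>choice_sets m k. w' C * (c C (fst x) (snd x) * H (fst x) (snd x)))"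
    unfolding aw_sum c_def by (simp add: sum_distrib_right mult.assoc)
  also have "\<dots> = (\<Sum>C\<in>choice_sets m k. \<Sum>x\<in>pairs m. w' C * (c C (fst x) (snd x) * H (fst x) (snd x)))"
    by (rule sum.swap)
  also have "\<dots> = (\<Sum>C\<in>choice_sets m k. w' C * (\<Sum>x\<in>pairs m. c C (fst x) (snd x) * H (fst x) (snd x)))"
    by (simp add: sum_distrib_left)
  finally show ?thesis unfolding c_def H_def by (simp add: split_def)
qed

lemma RSL_eq:
  assumes mn: "m = Suc n" and Sg: "Sigma m k p w = Si"
  shows "RSLGamma m k p w C = (\<Sum>(s,t)\<in>pairs m. (p s * p t * (if s \<in> C \<and> t \<in> C then 1 / (setsum_pi p C)^2 else 0)) *
     ((if s < n then Si $$ (s,s) else 0) + (if t < n then Si $$ (t,t) else 0)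
      - 2 * (if s < n \<and> t < n then Si $$ (s,t) else 0)))"
proof -
  have G: "Gamma m k p w u v = (if u < n then Si $$ (u,u) else 0) + (if v < n then Si $$ (v,v) else 0)
      - 2 * (if u < n \<and> v < n then Si $$ (u,v) else 0)" if "(u,v) \<in> pairs m" for u v
    using that Sg unfolding pairs_def Gamma_def Let_def mn by auto
  have set: "{(u, v). u < v \<and> v < m \<and> u \<in> C \<and> v \<in> C} = {x \<in> pairs m. fst x \<in> C \<and> snd x \<in> C}"
    unfolding pairs_def by auto
  have "RSLGamma m k p w C = (\<Sum>x\<in>pairs m. if fst x \<in> C \<and> snd x \<in> C then
       p (fst x) * p (snd x) * Gamma m k p w (fst x) (snd x) else 0) / (setsum_pi p C)^2"
    unfolding RSLGamma_def set sum.inter_filter[OF finite_pairs]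
    by (intro arg_cong2[where f="(/)"] sum.cong refl) (auto split: prod.splits)
  also have "\<dots> = (\<Sum>x\<in>pairs m. (if fst x \<in> C \<and> snd x \<in> C then
       p (fst x) * p (snd x) * Gamma m k p w (fst x) (snd x) else 0) / (setsum_pi p C)^2)"
    by (rule sum_divide_distrib)
  also have "\<dots> = (\<Sum>(s,t)\<in>pairs m. (p s * p t * (if s \<in> C \<and> t \<in> C then 1 / (setsum_pi p C)^2 else 0)) *
     ((if s < n then Si $$ (s,s) else 0) + (if t < n then Si $$ (t,t) else 0)
      - 2 * (if s < n \<and> t < n then Si $$ (s,t) else 0)))"
    by (rule sum.cong[OF refl]) (auto simp: G)
  finally show ?thesis .
qed

lemma sym_inverse:
  assumes A: "A \<in> carrier_mat n n" and sA: "symm n A" and Si: "Si \<in> carrier_mat n n"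
    and ASi: "A * Si = 1\<^sub>m n" and SiA: "Si * A = 1\<^sub>m n"
  shows "symm n Si"
proof -
  let ?St = "transpose_mat Si"
  have St: "?St \<in> carrier_mat n n" using Si by simp
  have AT: "transpose_mat A = A" using A sA unfolding symm_def by (intro eq_matI) auto
  have "?St * A = transpose_mat (A * Si)" using transpose_mult[OF A Si] AT by simp
  also have "\<dots> = 1\<^sub>m n" using ASi by simp
  finally have StA: "?St * A = 1\<^sub>m n" .
  have "?St = ?St * (A * Si)" using ASi St by simp
  also have "\<dots> = (?St * A) * Si" using assoc_mult_mat[OF St A Si] by simp
  also have "\<dots> = Si" using StA Si by simp
  finally have eq: "?St = Si" .
  show ?thesis unfolding symm_def
  proof (intro allI impI)
    fix i j assume i: "i < n" and j: "j < n"
    have "Si $$ (i,j) = ?St $$ (i,j)" using eq by simp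
    also have "\<dots> = Si $$ (j,i)" using i j Si by simp
    finally show "Si $$ (i,j) = Si $$ (j,i)" .
  qed
qed

lemma deriv_arg:
  fixes l :: "nat \<Rightarrow> real"
  assumes h: "\<And>t. 0 < t \<Longrightarrow> t < 1 \<Longrightarrow> (\<Prod>i<n. 1 - t + t * l i) \<le> 1"
  shows "(\<Sum>i<n. l i) \<le> real n"
proof (rule ccontr)
  assume "\<not> (\<Sum>i<n. l i) \<le> real n"
  hence pos: "0 < (\<Sum>i<n. l i - 1)" by (simp add: sum_subtractf)
  define P where "P t = (\<Prod>i<n. 1 - t + t * l i)" for t :: real
  have "((\<lambda>u. \<Prod>i\<in>{..<n}. 1 - u + u * l i) has_field_derivative
     (\<Sum>i\<in>{..<n}. (l i - 1) * (\<Prod>j\<in>{..<n}-{i}. 1 - 0 + 0 * l j))) (at 0)"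
    by (rule has_field_derivative_prod) (auto intro!: derivative_eq_intros)
  hence "DERIV P 0 :> (\<Sum>i<n. l i - 1)" unfolding P_def by simp
  from DERIV_pos_inc_right[OF this pos] obtain d where d: "d > 0"
    and inc: "\<And>h. h > 0 \<Longrightarrow> h < d \<Longrightarrow> P 0 < P (0 + h)" by blast
  define h0 where "h0 = min (d/2) (1/2)"
  have "0 < h0" "h0 < d" "h0 < 1" using d unfolding h0_def by auto
  hence "P 0 < P h0" using inc by simp
  moreover have "P 0 = 1" unfolding P_def by simp
  moreover have "P h0 \<le> 1" unfolding P_def using h \<open>0 < h0\<close> \<open>h0 < 1\<close> by simp
  ultimately show False by simp
qed

lemma exists_pd_design:
  assumes mn: "m = Suc n" and k2: "2 \<le> k" and km: "k \<le> m" and p: "\<And>i. i < m \<Longrightarrow> 0 < p i"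
  shows "\<exists>w0 \<in> simplex m k. det (Mred m k p w0) > 0"
proof -
  let ?cs = "choice_sets m k"
  have ne: "{..<k} \<in> ?cs" using km unfolding choice_sets_def by auto
  hence cpos: "card ?cs > 0" using finite_cs card_gt_0_iff by blast
  define w0 where "w0 C = 1 / real (card ?cs)" for C :: "nat set"
  have w0s: "w0 \<in> simplex m k" unfolding simplex_def w0_def using cpos by simp
  have w0nn: "\<And>C. C \<in> ?cs \<Longrightarrow> 0 \<le> w0 C" unfolding w0_def by simp
  have apos: "0 < aw m k p w0 s t" if s: "s < m" and t: "t < m" and st: "s \<noteq> t" for s t
  proof -
    have "k - 2 \<le> card ({..<m} - {s,t})" using s t st km by (simp add: card_Diff_subset)
    then obtain D where D: "D \<subseteq> {..<m} - {s,t}" "card D = k - 2" "finite D"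
      by (rule obtain_subset_with_card_n)
    define C0 where "C0 = insert s (insert t D)"
    have sD: "s \<notin> D" and tD: "t \<notin> D" using D(1) by auto
    have "card C0 = Suc (Suc (card D))" unfolding C0_def using sD tD st D(3) by simp
    hence "card C0 = k" using D(2) k2 by simp
    hence C0: "C0 \<in> ?cs" unfolding choice_sets_def C0_def using D s t by auto
    have Sp: "0 < setsum_pi p C0" by (rule setsum_pi_pos[OF C0 k2 p])
    have nn: "0 \<le> w0 C * (p s * p t * (if s \<in> C \<and> t \<in> C then 1 / (setsum_pi p C)^2 else 0))" for C
      using p[OF s] p[OF t] unfolding w0_def by simp
    have "0 < w0 C0 * (p s * p t * (if s \<in> C0 \<and> t \<in> C0 then 1 / (setsum_pi p C0)^2 else 0))"
      using cpos p[OF s] p[OF t] Sp unfolding w0_def C0_def by simp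
    also have "\<dots> \<le> aw m k p w0 s t" unfolding aw_sum
      by (rule member_le_sum[OF C0 _ finite_cs]) (rule nn)
    finally show ?thesis .
  qed
  have Meq: "Mred m k p w0 = lapmat n (aw m k p w0)" by (rule Mred_lapmat[OF mn])
  have pd: "pd n (Mred m k p w0)" unfolding Meq
    by (rule lap_pd[OF aw_sym]) (use aw_nonneg[OF w0nn p] apos mn in auto)
  have ps: "psd n (Mred m k p w0)" unfolding Meq
    by (rule lap_psd[OF aw_sym]) (use aw_nonneg[OF w0nn p] mn in auto)
  have sy: "symm n (Mred m k p w0)" unfolding Meq by (rule lapmat_symm[OF aw_sym])
  have car: "Mred m k p w0 \<in> carrier_mat n n" unfolding Meq by simp
  have "det (Mred m k p w0) \<noteq> 0" by (rule pd_det[OF car pd])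
  moreover have "det (Mred m k p w0) \<ge> 0" by (rule psd_det_nonneg[OF car sy ps])
  ultimately show ?thesis using w0s by force
qed

theorem theorem3p4:
  fixes m k :: nat and p :: "nat \<Rightarrow> real" and w :: "nat set \<Rightarrow> real"
  assumes "m \<ge> 2" and "2 \<le> k" and "k \<le> m"
    and "\<And>i. i < m \<Longrightarrow> p i > 0"
  shows "locally_D_optimal m k p w \<longleftrightarrow>
    (w \<in> simplex m k \<and> det (Mred m k p w) \<noteq> 0 \<and>
     (\<forall>C\<in>choice_sets m k. RSLGamma m k p w C \<le> real m - 1) \<and>
     (\<Sum>C\<in>choice_sets m k. (RSLGamma m k p w C - (real m - 1)) * w C) = 0)"
proof -
  obtain n where mn: "m = Suc n" using assms(1) by (cases m) auto
  have rm: "real m - 1 = real n" using mn by simp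
  have pp: "\<And>i. i < m \<Longrightarrow> 0 < p i" using assms(4) by blast
  let ?cs = "choice_sets m k"
  let ?A = "Mred m k p w"
  have simpD: "0 \<le> w' C" if "w' \<in> simplex m k" "C \<in> ?cs" for w' C
    using that unfolding simplex_def by auto
  have simpS: "(\<Sum>C\<in>?cs. w' C) = 1" if "w' \<in> simplex m k" for w'
    using that unfolding simplex_def by auto
  have car: "Mred m k p w' \<in> carrier_mat n n" for w' unfolding Mred_lapmat[OF mn] by simp
  have sy: "symm n (Mred m k p w')" for w' unfolding Mred_lapmat[OF mn] by (rule lapmat_symm[OF aw_sym])
  have ps: "psd n (Mred m k p w')" if w': "w' \<in> simplex m k" for w'
  proof -
    have nn: "\<And>C. C \<in> ?cs \<Longrightarrow> 0 \<le> w' C" using simpD[OF w'] by blast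
    show ?thesis unfolding Mred_lapmat[OF mn]
      by (rule lap_psd[OF aw_sym]) (use aw_nonneg[where p=p, OF nn pp] mn in auto)
  qed
  have inv: "\<exists>Si. Sigma m k p w' = Si \<and> Si \<in> carrier_mat n n \<and> Mred m k p w' * Si = 1\<^sub>m n
      \<and> Si * Mred m k p w' = 1\<^sub>m n" if d: "det (Mred m k p w') \<noteq> 0" for w'
  proof -
    have U: "Mred m k p w' \<in> Units (ring_mat TYPE(real) n ())" by (rule det_non_zero_imp_unit[OF car d])
    obtain Si where Si: "mat_inverse (Mred m k p w') = Some Si"
      using mat_inverse(1)[OF car, of w' "()"] U by (cases "mat_inverse (Mred m k p w')") auto
    show ?thesis using mat_inverse(2)[OF car Si] Si unfolding Sigma_def by auto
  qed
  have tr: "mytr (Si * Mred m k p w') = (\<Sum>C\<in>?cs. w' C * RSLGamma m k p w C)"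
    if "Sigma m k p w = Si" "Si \<in> carrier_mat n n" "symm n Si" for Si w'
    using trace_Mred[OF mn that(2) that(3), of k p w'] RSL_eq[OF mn that(1)] by simp
  show ?thesis
  proof
    assume opt: "locally_D_optimal m k p w"
    hence ws: "w \<in> simplex m k" and le: "\<forall>w'\<in>simplex m k. logdet m k p w' \<le> logdet m k p w"
      unfolding locally_D_optimal_def by auto
    obtain w0 where w0: "w0 \<in> simplex m k" "det (Mred m k p w0) > 0"
      using exists_pd_design[where p=p, OF mn assms(2) assms(3) pp] by blast
    have "logdet m k p w0 \<noteq> -\<infinity>" using w0(2) unfolding logdet_def by simp
    moreover have "logdet m k p w0 \<le> logdet m k p w" using le w0(1) by blast
    ultimately have "logdet m k p w \<noteq> -\<infinity>" by auto
    hence dA: "det ?A > 0" unfolding logdet_def by (auto split: if_splits)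
    obtain Si where Sg: "Sigma m k p w = Si" and Si: "Si \<in> carrier_mat n n"
      and ASi: "?A * Si = 1\<^sub>m n" and SiA: "Si * ?A = 1\<^sub>m n" using inv[of w] dA by auto
    have sS: "symm n Si" by (rule sym_inverse[OF car sy Si ASi SiA])
    have pA: "pd n ?A" by (rule psd_det_pd[OF car sy ps[OF ws]]) (use dA in simp)
    have ii: "\<forall>C\<in>?cs. RSLGamma m k p w C \<le> real m - 1"
    proof
      fix C assume C: "C \<in> ?cs"
      define \<delta> where "\<delta> C' = (if C' = C then 1 else 0 :: real)" for C'
      let ?B = "Mred m k p \<delta>"
      have dnn: "\<And>C'. C' \<in> ?cs \<Longrightarrow> 0 \<le> \<delta> C'" by (simp add: \<delta>_def)
      have dsum: "(\<Sum>C'\<in>?cs. \<delta> C') = 1" using C finite_cs unfolding \<delta>_def by simp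
      have psB: "psd n ?B" unfolding Mred_lapmat[OF mn]
        by (rule lap_psd[OF aw_sym]) (use aw_nonneg[where p=p, OF dnn pp] mn in auto)
      from eig_main[OF car car Si sy sy pA psB ASi] obtain l where
        l0: "\<forall>i<n. 0 \<le> l i" and ltr: "mytr (Si * ?B) = (\<Sum>i<n. l i)"
        and ldet: "\<forall>c t. det (c \<cdot>\<^sub>m 1\<^sub>m n + t \<cdot>\<^sub>m (Si * ?B)) = (\<Prod>i<n. c + t * l i)" by blast
      have "mytr (Si * ?B) = (\<Sum>C'\<in>?cs. \<delta> C' * RSLGamma m k p w C')" by (rule tr[OF Sg Si sS])
      also have "\<dots> = (\<Sum>C'\<in>?cs. if C' = C then RSLGamma m k p w C' else 0)"
        by (intro sum.cong refl) (simp add: \<delta>_def)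
      also have "\<dots> = RSLGamma m k p w C" using C by (simp add: sum.delta[OF finite_cs])
      finally have trB: "mytr (Si * ?B) = RSLGamma m k p w C" .
      have P1: "(\<Prod>i<n. 1 - t + t * l i) \<le> 1" if t: "0 < t" "t < 1" for t
      proof -
        define wt where "wt C' = (1 - t) * w C' + t * \<delta> C'" for C'
        have wts: "wt \<in> simplex m k" unfolding simplex_def
        proof (intro CollectI conjI ballI)
          fix C' assume "C' \<in> ?cs"
          thus "0 \<le> wt C'" unfolding wt_def using t simpD[OF ws] dnn by (intro add_nonneg_nonneg mult_nonneg_nonneg) auto
        next
          show "(\<Sum>C'\<in>?cs. wt C') = 1" unfolding wt_def
            using simpS[OF ws] dsum by (simp add: sum.distrib sum_distrib_left[symmetric])
        qed
        have awt: "aw m k p wt = (\<lambda>s t'. (1 - t) * aw m k p w s t' + t * aw m k p \<delta> s t')"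
          unfolding wt_def by (intro ext) (rule aw_lin)
        have "Mred m k p wt = (1 - t) \<cdot>\<^sub>m ?A + t \<cdot>\<^sub>m ?B"
          unfolding Mred_lapmat[OF mn] awt by (rule lapmat_lin)
        also have "\<dots> = ?A * ((1 - t) \<cdot>\<^sub>m 1\<^sub>m n + t \<cdot>\<^sub>m (Si * ?B))"
        proof -
          have "?A * ((1 - t) \<cdot>\<^sub>m 1\<^sub>m n + t \<cdot>\<^sub>m (Si * ?B)) = ?A * ((1 - t) \<cdot>\<^sub>m 1\<^sub>m n) + ?A * (t \<cdot>\<^sub>m (Si * ?B))"
            by (rule mult_add_distrib_mat[OF car]) (use Si car in auto)
          also have "?A * ((1 - t) \<cdot>\<^sub>m 1\<^sub>m n) = (1 - t) \<cdot>\<^sub>m ?A"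
            using mult_smult_distrib[OF car[of w] one_carrier_mat] right_mult_one_mat[OF car[of w]] by simp
          also have "?A * (t \<cdot>\<^sub>m (Si * ?B)) = t \<cdot>\<^sub>m (?A * (Si * ?B))"
            by (rule mult_smult_distrib[OF car]) (use Si car in auto)
          also have "?A * (Si * ?B) = ?B"
            using assoc_mult_mat[OF car[of w] Si car[of \<delta>], symmetric] ASi left_mult_one_mat[OF car[of \<delta>]] by simp
          finally show ?thesis by simp
        qed
        finally have Meq: "Mred m k p wt = ?A * ((1 - t) \<cdot>\<^sub>m 1\<^sub>m n + t \<cdot>\<^sub>m (Si * ?B))" .
        have "det (Mred m k p wt) = det ?A * det ((1 - t) \<cdot>\<^sub>m 1\<^sub>m n + t \<cdot>\<^sub>m (Si * ?B))"
          unfolding Meq by (rule det_mult[OF car]) (use Si car in auto)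
        also have "\<dots> = det ?A * (\<Prod>i<n. 1 - t + t * l i)" using ldet by simp
        finally have dwt: "det (Mred m k p wt) = det ?A * (\<Prod>i<n. 1 - t + t * l i)" .
        have fpos: "0 < 1 - t + t * l i" if "i < n" for i
        proof -
          have "0 \<le> t * l i" using l0 that t by simp
          thus ?thesis using t by linarith
        qed
        have Ppos: "0 < (\<Prod>i<n. 1 - t + t * l i)" by (rule prod_pos) (use fpos in auto)
        have dwtpos: "det (Mred m k p wt) > 0" using dwt dA Ppos by simp
        have "logdet m k p wt \<le> logdet m k p w" using le wts by blast
        hence "ln (det (Mred m k p wt)) \<le> ln (det ?A)" using dwtpos dA unfolding logdet_def by simp
        hence "det (Mred m k p wt) \<le> det ?A" using dwtpos dA by simp
        hence "det ?A * (\<Prod>i<n. 1 - t + t * l i) \<le> det ?A * 1" using dwt by simp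
        thus ?thesis using dA by (simp only: mult_le_cancel_left_pos)
      qed
      have "(\<Sum>i<n. l i) \<le> real n" by (rule deriv_arg) (rule P1)
      thus "RSLGamma m k p w C \<le> real m - 1" using trB ltr rm by simp
    qed
    have "mytr (Si * ?A) = (\<Sum>C\<in>?cs. w C * RSLGamma m k p w C)" by (rule tr[OF Sg Si sS])
    moreover have "mytr (Si * ?A) = real n" unfolding SiA mytr_def by simp
    ultimately have "(\<Sum>C\<in>?cs. w C * RSLGamma m k p w C) = real n" by simp
    hence iii: "(\<Sum>C\<in>?cs. (RSLGamma m k p w C - (real m - 1)) * w C) = 0"
      using simpS[OF ws] rm
      by (simp add: algebra_simps sum_subtractf sum_distrib_left[symmetric] sum_distrib_right[symmetric])
    show "w \<in> simplex m k \<and> det ?A \<noteq> 0 \<and> (\<forall>C\<in>?cs. RSLGamma m k p w C \<le> real m - 1) \<and>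
      (\<Sum>C\<in>?cs. (RSLGamma m k p w C - (real m - 1)) * w C) = 0"
      using ws dA ii iii by simp
  next
    assume rhs: "w \<in> simplex m k \<and> det ?A \<noteq> 0 \<and> (\<forall>C\<in>?cs. RSLGamma m k p w C \<le> real m - 1) \<and>
      (\<Sum>C\<in>?cs. (RSLGamma m k p w C - (real m - 1)) * w C) = 0"
    hence ws: "w \<in> simplex m k" and dA0: "det ?A \<noteq> 0"
      and ii: "\<forall>C\<in>?cs. RSLGamma m k p w C \<le> real m - 1" by auto
    have dA: "det ?A > 0" using psd_det_nonneg[OF car sy ps[OF ws]] dA0 by simp
    obtain Si where Sg: "Sigma m k p w = Si" and Si: "Si \<in> carrier_mat n n"
      and ASi: "?A * Si = 1\<^sub>m n" and SiA: "Si * ?A = 1\<^sub>m n" using inv[of w] dA0 by auto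
    have sS: "symm n Si" by (rule sym_inverse[OF car sy Si ASi SiA])
    have pA: "pd n ?A" by (rule psd_det_pd[OF car sy ps[OF ws] dA0])
    have dSi: "det Si * det ?A = 1"
      using det_mult[OF Si car[of w]] SiA det_one by metis
    show "locally_D_optimal m k p w" unfolding locally_D_optimal_def
    proof (intro conjI ballI)
      show "w \<in> simplex m k" by (rule ws)
      fix w' assume w': "w' \<in> simplex m k"
      let ?B = "Mred m k p w'"
      show "logdet m k p w' \<le> logdet m k p w"
      proof (cases "det ?B > 0")
        case False thus ?thesis unfolding logdet_def by simp
      next
        case True
        from eig_main[OF car car Si sy sy pA ps[OF w'] ASi] obtain l where
          l0: "\<forall>i<n. 0 \<le> l i" and ltr: "mytr (Si * ?B) = (\<Sum>i<n. l i)"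
          and ldet: "\<forall>c t. det (c \<cdot>\<^sub>m 1\<^sub>m n + t \<cdot>\<^sub>m (Si * ?B)) = (\<Prod>i<n. c + t * l i)" by blast
        have "(0::real) \<cdot>\<^sub>m 1\<^sub>m n + 1 \<cdot>\<^sub>m (Si * ?B) = Si * ?B" using Si car[of w'] by (intro eq_matI) auto
        hence "det (Si * ?B) = (\<Prod>i<n. 0 + 1 * l i)" using ldet by metis
        hence Pl: "det Si * det ?B = (\<Prod>i<n. l i)" using det_mult[OF Si car[of w']] by simp
        have PB: "(\<Prod>i<n. l i) = det ?B / det ?A" using Pl dSi dA
          by (simp add: field_simps) (metis mult.assoc mult.commute mult_1)
        hence Ppos: "(\<Prod>i<n. l i) > 0" using True dA by simp
        have lpos: "0 < l i" if i: "i < n" for i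
        proof (rule ccontr)
          assume "\<not> 0 < l i"
          hence "l i = 0" using l0 i by force
          hence "(\<Prod>i<n. l i) = 0" using i by (intro prod_zero) auto
          thus False using Ppos by linarith
        qed
        have "ln (\<Prod>i<n. l i) = (\<Sum>i<n. ln (l i))" by (rule ln_prod) (simp, metis lessThan_iff lpos less_irrefl)
        also have "\<dots> \<le> (\<Sum>i<n. l i - 1)" by (rule sum_mono) (use lpos ln_le_minus_one in auto)
        also have "\<dots> = mytr (Si * ?B) - real n" using ltr by (simp add: sum_subtractf)
        also have "mytr (Si * ?B) = (\<Sum>C\<in>?cs. w' C * RSLGamma m k p w C)" by (rule tr[OF Sg Si sS])
        also have "\<dots> \<le> (\<Sum>C\<in>?cs. w' C * real n)"
          by (rule sum_mono) (use ii rm simpD[OF w'] in \<open>auto intro!: mult_left_mono\<close>)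
        also have "\<dots> = real n" using simpS[OF w'] by (simp add: sum_distrib_right[symmetric])
        finally have "ln (det ?B / det ?A) \<le> 0" using PB by simp
        hence "ln (det ?B) \<le> ln (det ?A)" using True dA by (simp add: ln_div)
        thus ?thesis using True dA unfolding logdet_def by simp
      qed
    qed
  qed
qed

end
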